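(* Assume (A1) and (A2), and let $\bar X\in\mathcal{X}_\star$, $\bar S\in\mathcal{S}_\star$, $G\in\mathbb{S}^n$ and $\epsilon\ge0$. (1) If $\|\mathcal{P}G\|_F\le\epsilon$ and $\langle G,\bar S\rangle=0$, then $|\langle G,S\rangle|\le\|S-\bar S\|_F\,\epsilon$ for all $S\in\mathcal{S}_\star$. (2) If $\|\mathcal{P}^\perp G\|_F\le\epsilon$ and $\langle G,\bar X\rangle=0$, then $|\langle G,X\rangle|\le\|X-\bar X\|_F\,\epsilon$ for all $X\in\mathcal{X}_\star$.
   Context: Notation: $\mathbb{S}^n$ is the space of real symmetric $n\times n$ matrices with $\langle A,B\rangle=\mathrm{tr}(AB)$ and Frobenius norm $\|\cdot\|_F$. SDP data $C,A_1,\dots,A_m\in\mathbb{S}^n$, $b\in\mathbb{R}^m$ define $\mathcal{A}X:=(\langle A_i,X\rangle)_i$ and $\mathcal{A}^*y:=\sum_iy_iA_i$. A KKT point is $(X,y,S)$ with $\mathcal{A}X=b$, $\mathcal{A}^*y+S=C$, $X,S\succeq0$, $\langle X,S\rangle=0$. $\mathcal{X}_\star$, $\mathcal{S}_\star$ are the sets of $X$, resp. $S$, in KKT points. (A1) $\mathcal{A}$ is surjective. (A2) Some KKT point $(X_{sc},y_{sc},S_{sc})$ has $\mathrm{rank}X_{sc}+\mathrm{rank}S_{sc}=n$. $\mathcal{P}:=\mathcal{A}^*(\mathcal{A}\mathcal{A}^* )^{-1}\mathcal{A}$ and $\mathcal{P}^\perp:=\mathrm{Id}-\mathcal{P}$.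 *)

theory Defs
  imports "HOL-Analysis.Analysis"
begin

definition sym_mat :: "real^'n^'n \<Rightarrow> bool" where
  "sym_mat A \<longleftrightarrow> transpose A = A"

definition sinner :: "real^'n^'n \<Rightarrow> real^'n^'n \<Rightarrow> real" where
  "sinner A B = trace (A ** B)"

definition frob :: "real^'n^'n \<Rightarrow> real" where
  "frob A = sqrt (sinner A A)"

definition psd :: "real^'n^'n \<Rightarrow> bool" where
  "psd A \<longleftrightarrow> sym_mat A \<and> (\<forall>x. 0 \<le> x \<bullet> (A *v x))"

definition opA :: "('m::finite \<Rightarrow> real^'n^'n) \<Rightarrow> real^'n^'n \<Rightarrow> real^'m" where
  "opA As X = (\<chi> i. sinner (As i) X)"

definition opAadj :: "('m::finite \<Rightarrow> real^'n^'n) \<Rightarrow> real^'m \<Rightarrow> real^'n^'n" where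
  "opAadj As y = (\<Sum>i\<in>UNIV. (y $ i) *\<^sub>R As i)"

definition gramA :: "('m::finite \<Rightarrow> real^'n^'n) \<Rightarrow> real^'m^'m" where
  "gramA As = (\<chi> i j. sinner (As i) (As j))"

definition projP :: "('m::finite \<Rightarrow> real^'n^'n) \<Rightarrow> real^'n^'n \<Rightarrow> real^'n^'n" where
  "projP As G = opAadj As (matrix_inv (gramA As) *v opA As G)"

definition projPperp :: "('m::finite \<Rightarrow> real^'n^'n) \<Rightarrow> real^'n^'n \<Rightarrow> real^'n^'n" where
  "projPperp As G = G - projP As G"

definition KKT :: "real^'n^'n \<Rightarrow> ('m::finite \<Rightarrow> real^'n^'n) \<Rightarrow> real^'m
      \<Rightarrow> real^'n^'n \<Rightarrow> real^'m \<Rightarrow> real^'n^'n \<Rightarrow> bool" where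
  "KKT C As b X y S \<longleftrightarrow> opA As X = b \<and> opAadj As y + S = C \<and> psd X \<and> psd S
      \<and> sinner X S = 0"

definition Xstar where "Xstar C As b = {X. \<exists>y S. KKT C As b X y S}"
definition Sstar where "Sstar C As b = {S. \<exists>X y. KKT C As b X y S}"

definition A1 :: "('m::finite \<Rightarrow> real^'n^'n) \<Rightarrow> bool" where
  "A1 As \<longleftrightarrow> (\<forall>v. \<exists>X. sym_mat X \<and> opA As X = v)"

definition A2 :: "real^'n^'n \<Rightarrow> ('m::finite \<Rightarrow> real^'n^'n) \<Rightarrow> real^'m \<Rightarrow> bool" where
  "A2 C As b \<longleftrightarrow> (\<exists>X y S. KKT C As b X y S \<and> rank X + rank S = CARD('n))"

end

theory Submission
  imports Defs
begin
lemma sinner_inner: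
  assumes "sym_mat B"
  shows "sinner A B = A \<bullet> B"
proof -
  have "sinner A B = (\<Sum>i\<in>UNIV. \<Sum>k\<in>UNIV. A$i$k * B$k$i)"
    by (simp add: sinner_def trace_def matrix_matrix_mult_def)
  also have "\<dots> = (\<Sum>i\<in>UNIV. \<Sum>k\<in>UNIV. A$i$k * B$i$k)"
  proof -
    have "B$k$i = B$i$k" for i k
      using assms unfolding sym_mat_def by (metis transpose_def vec_lambda_beta)
    then show ?thesis by simp
  qed
  also have "\<dots> = A \<bullet> B" by (simp add: inner_vec_def)
  finally show ?thesis .
qed

lemma sinner_inner':
  assumes "sym_mat A"
  shows "sinner A B = A \<bullet> B"
proof -
  have "sinner A B = sinner B A" unfolding sinner_def by (rule trace_mul_sym)
  also have "\<dots> = B \<bullet> A" by (rule sinner_inner[OF assms])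
  finally show ?thesis by (simp only: inner_commute)
qed

lemma frob_norm: "sym_mat A \<Longrightarrow> frob A = norm A"
  unfolding frob_def norm_eq_sqrt_inner by (subst sinner_inner) auto

lemma opA_inner:
  assumes "\<forall>i. sym_mat (As i)"
  shows "opA As X = (\<chi> i. As i \<bullet> X)"
  using assms by (simp add: opA_def sinner_inner')

lemma opAadj_inner:
  assumes "\<forall>i. sym_mat (As i)"
  shows "X \<bullet> opAadj As w = w \<bullet> opA As X"
proof -
  have "X \<bullet> opAadj As w = (\<Sum>i\<in>UNIV. w$i * (X \<bullet> As i))"
    by (simp add: opAadj_def inner_sum_right)
  also have "\<dots> = (\<Sum>i\<in>UNIV. w$i * (As i \<bullet> X))"
    by (simp only: inner_commute)
  also have "\<dots> = w \<bullet> opA As X"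
    using assms by (simp add: opA_inner inner_vec_def)
  finally show ?thesis .
qed

lemma sym_mat_opAadj:
  assumes "\<forall>i. sym_mat (As i)"
  shows "sym_mat (opAadj As w)"
proof -
  have "(opAadj As w)$j$i = (opAadj As w)$i$j" for i j
  proof -
    have "As k $j$i = As k $i$j" for k
      using assms unfolding sym_mat_def by (metis transpose_def vec_lambda_beta)
    then show ?thesis by (simp add: opAadj_def sum_component)
  qed
  then show ?thesis unfolding sym_mat_def transpose_def by (simp add: vec_eq_iff)
qed

lemma opA_opAadj:
  assumes "\<forall>i. sym_mat (As i)"
  shows "opA As (opAadj As z) = gramA As *v z"
proof -
  have "As i \<bullet> opAadj As z = (\<Sum>j\<in>UNIV. (As i \<bullet> As j) * z$j)" for i
    by (simp add: opAadj_def inner_sum_right mult.commute)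
  then show ?thesis using assms
    by (simp add: opA_inner gramA_def sinner_inner' matrix_vector_mult_def vec_eq_iff)
qed

lemma opA_diff:
  assumes "\<forall>i. sym_mat (As i)"
  shows "opA As (X - Y) = opA As X - opA As Y"
  using assms by (simp add: opA_inner vec_eq_iff inner_diff_right)
lemma gram_inj:
  assumes "\<forall>i. sym_mat (As i)" and "A1 As"
  shows "inj ((*v) (gramA As))"
proof -
  have "v = 0" if "gramA As *v v = 0" for v
  proof -
    have "opAadj As v \<bullet> opAadj As v = v \<bullet> (gramA As *v v)"
      using opAadj_inner[OF assms(1)] opA_opAadj[OF assms(1)] by metis
    then have z: "opAadj As v = 0" using that by simp
    obtain X where "sym_mat X" "opA As X = v" using assms(2) unfolding A1_def by blast
    then have "v \<bullet> v = X \<bullet> opAadj As v" using opAadj_inner[OF assms(1)] by metis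
    then show ?thesis using z by simp
  qed
  then show ?thesis
    by (metis (no_types, lifting) injI matrix_vector_mult_diff_distrib right_minus_eq)
qed

lemma gram_inv:
  assumes "\<forall>i. sym_mat (As i)" and "A1 As"
  shows "gramA As *v (matrix_inv (gramA As) *v v) = v"
proof -
  have "invertible (gramA As)"
    using gram_inj[OF assms] matrix_left_invertible_injective invertible_left_inverse by blast
  then have "gramA As ** matrix_inv (gramA As) = mat 1"
    unfolding invertible_def matrix_inv_def by (rule someI_ex[THEN conjunct1])
  then show ?thesis by (metis matrix_vector_mul_assoc matrix_vector_mul_lid)
qed

lemma opA_projP:
  assumes "\<forall>i. sym_mat (As i)" and "A1 As"
  shows "opA As (projP As G) = opA As G"
  unfolding projP_def using opA_opAadj[OF assms(1)] gram_inv[OF assms] by simp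

lemma psd_sym: "psd A \<Longrightarrow> sym_mat A" by (simp add: psd_def)

lemma sym_diff: "sym_mat A \<Longrightarrow> sym_mat B \<Longrightarrow> sym_mat (A - B)"
  by (simp add: sym_mat_def transpose_def vec_eq_iff)

theorem lemma4p3:
  fixes C :: "real^'n^'n" and As :: "'m::finite \<Rightarrow> real^'n^'n" and b :: "real^'m"
    and Xb Sb G :: "real^'n^'n" and \<epsilon> :: real
  assumes "sym_mat C" and "\<forall>i. sym_mat (As i)"
    and "A1 As" and "A2 C As b"
    and "Xb \<in> Xstar C As b" and "Sb \<in> Sstar C As b"
    and "sym_mat G" and "\<epsilon> \<ge> 0"
  shows "(frob (projP As G) \<le> \<epsilon> \<and> sinner G Sb = 0 \<longrightarrow>
           (\<forall>S\<in>Sstar C As b. \<bar>sinner G S\<bar> \<le> frob (S - Sb) * \<epsilon>))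
       \<and> (frob (projPperp As G) \<le> \<epsilon> \<and> sinner G Xb = 0 \<longrightarrow>
           (\<forall>X\<in>Xstar C As b. \<bar>sinner G X\<bar> \<le> frob (X - Xb) * \<epsilon>))"
proof (intro conjI impI ballI)
  have symA: "\<forall>i. sym_mat (As i)" by fact
  have symP: "sym_mat (projP As G)" unfolding projP_def by (rule sym_mat_opAadj[OF symA])
  {
    fix S assume h: "frob (projP As G) \<le> \<epsilon> \<and> sinner G Sb = 0" and S: "S \<in> Sstar C As b"
    obtain X y where K: "KKT C As b X y S" using S unfolding Sstar_def by blast
    obtain Xb' yb where Kb: "KKT C As b Xb' yb Sb" using assms(6) unfolding Sstar_def by blast
    have sS: "sym_mat S" and sSb: "sym_mat Sb" using K Kb by (auto simp: KKT_def psd_def)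
    have "opAadj As y + S = opAadj As yb + Sb" using K Kb by (simp add: KKT_def)
    moreover have "opAadj As yb - opAadj As y = opAadj As (yb - y)"
      by (simp add: opAadj_def scaleR_diff_left sum_subtractf)
    ultimately have D: "S - Sb = opAadj As (yb - y)" by (metis add_diff_cancel_left diff_add_eq diff_diff_eq2 add.commute)
    have "sinner G S = G \<bullet> S" using sinner_inner'[OF assms(7)] .
    moreover have "G \<bullet> Sb = 0" using h sinner_inner'[OF assms(7)] by simp
    ultimately have "sinner G S = G \<bullet> (S - Sb)" by (simp add: inner_diff_right)
    also have "\<dots> = (yb - y) \<bullet> opA As G" using D opAadj_inner[OF symA] by simp
    also have "\<dots> = projP As G \<bullet> (S - Sb)"
      using D opAadj_inner[OF symA] opA_projP[OF symA assms(3)] by simp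
    finally have eq: "sinner G S = projP As G \<bullet> (S - Sb)" .
    have "\<bar>sinner G S\<bar> \<le> norm (projP As G) * norm (S - Sb)"
      unfolding eq by (rule Cauchy_Schwarz_ineq2)
    also have "\<dots> \<le> \<epsilon> * norm (S - Sb)"
      using h frob_norm[OF symP] by (simp add: mult_right_mono)
    finally show "\<bar>sinner G S\<bar> \<le> frob (S - Sb) * \<epsilon>"
      using frob_norm[OF sym_diff[OF sS sSb]] by (simp add: mult.commute)
  }
  {
    fix X assume h: "frob (projPperp As G) \<le> \<epsilon> \<and> sinner G Xb = 0" and X: "X \<in> Xstar C As b"
    obtain y S where K: "KKT C As b X y S" using X unfolding Xstar_def by blast
    obtain yb Sb' where Kb: "KKT C As b Xb yb Sb'" using assms(5) unfolding Xstar_def by blast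
    have sX: "sym_mat X" and sXb: "sym_mat Xb" using K Kb by (auto simp: KKT_def psd_def)
    have D: "opA As (X - Xb) = 0" using K Kb opA_diff[OF symA] by (simp add: KKT_def)
    have symQ: "sym_mat (projPperp As G)" unfolding projPperp_def by (rule sym_diff[OF assms(7) symP])
    have "sinner G X = G \<bullet> X" using sinner_inner'[OF assms(7)] .
    moreover have "G \<bullet> Xb = 0" using h sinner_inner'[OF assms(7)] by simp
    ultimately have "sinner G X = G \<bullet> (X - Xb)" by (simp add: inner_diff_right)
    moreover have "projP As G \<bullet> (X - Xb) = 0"
      unfolding projP_def using opAadj_inner[OF symA] D by (simp add: inner_commute)
    ultimately have eq: "sinner G X = projPperp As G \<bullet> (X - Xb)"
      by (simp add: projPperp_def inner_diff_left)
    have "\<bar>sinner G X\<bar> \<le> norm (projPperp As G) * norm (X - Xb)"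
      unfolding eq by (rule Cauchy_Schwarz_ineq2)
    also have "\<dots> \<le> \<epsilon> * norm (X - Xb)"
      using h frob_norm[OF symQ] by (simp add: mult_right_mono)
    finally show "\<bar>sinner G X\<bar> \<le> frob (X - Xb) * \<epsilon>"
      using frob_norm[OF sym_diff[OF sX sXb]] by (simp add: mult.commute)
  }
qed

end
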